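(* Let $D$ be a tournament, $T\subseteq V(D)$ and $k\in\mathbb{N}$. Then $D$ has a $T$-feedback arc set of size at most $k$ if and only if there exists an order $\sigma$ of $V(D)$ with $\mathrm{cost}(\sigma)\le k$.
   Context: A tournament is a digraph with exactly one arc between every pair of distinct vertices. Given a terminal set $T\subseteq V(D)$, a $T$-cycle is a directed cycle containing at least one vertex of $T$. A $T$-feedback arc set is a set $S\subseteq A(D)$ such that $D-S$ (same vertex set, arcs $A(D)\setminus S$) contains no $T$-cycle. For an order $\sigma=(v_1,\dots,v_n)$ of $V(D)$, an arc $v_iv_j$ is forward if $i<j$ and backward if $i>j$. The span of a backward arc $v_rv_l$ ($r>l$) is the interval $[v_l,v_r]=\{v_i: l\le i\le r\}$, and the arc is said to be above every vertex of its span. A backward arc above at least one terminal is called affected, and $\mathrm{cost}(\sigma)$ is the number of affected arcs with respect to $\sigma$. *)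

theory Defs
  imports Main
begin

definition tournament :: "'a set \<Rightarrow> ('a \<times> 'a) set \<Rightarrow> bool" where
  "tournament V A \<longleftrightarrow> finite V \<and> A \<subseteq> V \<times> V \<and> (\<forall>v. (v, v) \<notin> A) \<and>
     (\<forall>u\<in>V. \<forall>v\<in>V. u \<noteq> v \<longrightarrow> ((u, v) \<in> A \<longleftrightarrow> (v, u) \<notin> A))"

definition dicycle :: "'a set \<Rightarrow> ('a \<times> 'a) set \<Rightarrow> 'a list \<Rightarrow> bool" where
  "dicycle V A cs \<longleftrightarrow> length cs \<ge> 2 \<and> distinct cs \<and> set cs \<subseteq> V \<and>
     (\<forall>i < length cs. (cs ! i, cs ! ((i + 1) mod length cs)) \<in> A)"

definition T_cycle :: "'a set \<Rightarrow> ('a \<times> 'a) set \<Rightarrow> 'a set \<Rightarrow> 'a list \<Rightarrow> bool" where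
  "T_cycle V A T cs \<longleftrightarrow> dicycle V A cs \<and> set cs \<inter> T \<noteq> {}"

definition T_fas :: "'a set \<Rightarrow> ('a \<times> 'a) set \<Rightarrow> 'a set \<Rightarrow> ('a \<times> 'a) set \<Rightarrow> bool" where
  "T_fas V A T S \<longleftrightarrow> S \<subseteq> A \<and> (\<nexists>cs. T_cycle V (A - S) T cs)"

text \<open>An order of V is a list enumerating V without repetition; position i corresponds to v_(i+1).\<close>

definition is_order :: "'a set \<Rightarrow> 'a list \<Rightarrow> bool" where
  "is_order V \<sigma> \<longleftrightarrow> distinct \<sigma> \<and> set \<sigma> = V"

definition affected_arcs :: "('a \<times> 'a) set \<Rightarrow> 'a set \<Rightarrow> 'a list \<Rightarrow> ('a \<times> 'a) set" where
  "affected_arcs A T \<sigma> = {(\<sigma> ! r, \<sigma> ! l) | r l. l < r \<and> r < length \<sigma> \<and>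
      (\<sigma> ! r, \<sigma> ! l) \<in> A \<and> (\<exists>i. l \<le> i \<and> i \<le> r \<and> \<sigma> ! i \<in> T)}"

definition cost :: "('a \<times> 'a) set \<Rightarrow> 'a set \<Rightarrow> 'a list \<Rightarrow> nat" where
  "cost A T \<sigma> = card (affected_arcs A T \<sigma>)"

end

theory Submission imports Defs begin

lemma cycle_from_trancl:
  assumes tt: "(t,t) \<in> R\<^sup>+" and irr: "\<forall>v. (v,v) \<notin> R"
  shows "\<exists>cs. 2 \<le> length cs \<and> distinct cs \<and> t \<in> set cs \<and>
     (\<forall>i<length cs. (cs!i, cs!((i+1) mod length cs)) \<in> R)"
proof -
  define P where "P n \<longleftrightarrow> n > 0 \<and> (\<exists>f. f 0 = t \<and> f n = t \<and> (\<forall>i<n. (f i, f (Suc i)) \<in> R))" for n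
  have "\<exists>n. P n" using tt unfolding P_def trancl_power relpow_fun_conv by blast
  then obtain n where Pn: "P n" and mn: "\<And>m. P m \<Longrightarrow> n \<le> m"
    by (metis LeastI Least_le)
  from Pn obtain f where n0: "n > 0" and f0: "f 0 = t" and fn: "f n = t"
    and st: "\<And>i. i<n \<Longrightarrow> (f i, f (Suc i)) \<in> R" unfolding P_def by blast
  define cs where "cs = map f [0..<n]"
  have len: "length cs = n" by (simp add: cs_def)
  have nth: "\<And>i. i < n \<Longrightarrow> cs!i = f i" by (simp add: cs_def)
  have n2: "2 \<le> n"
  proof (rule ccontr)
    assume "\<not> 2 \<le> n" then have "n = 1" using n0 by simp
    then show False using st[of 0] f0 fn irr by simp
  qed
  have dist: "distinct cs"
  proof (rule ccontr)
    assume "\<not> distinct cs"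
    then obtain i j where ij: "i < n" "j < n" "i \<noteq> j" "f i = f j"
      unfolding distinct_conv_nth len using nth by metis
    have "\<exists>i j. i < j \<and> j < n \<and> f i = f j"
      using ij by (metis linorder_neqE_nat)
    then obtain i j where ij: "i < j" "j < n" "f i = f j" by blast
    define g where "g k = (if k \<le> i then f k else f (k + (j - i)))" for k
    define m where "m = n - (j - i)"
    have "P m" unfolding P_def
    proof (intro conjI exI)
      show "m > 0" using ij by (simp add: m_def)
      show "g 0 = t" using f0 by (simp add: g_def)
      have "\<not> m \<le> i" using ij by (simp add: m_def)
      then show "g m = t" using ij fn by (simp add: g_def m_def)
      show "\<forall>k<m. (g k, g (Suc k)) \<in> R"
      proof (intro allI impI)
        fix k assume k: "k < m"
        show "(g k, g (Suc k)) \<in> R"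
        proof (cases "k < i")
          case True then show ?thesis using st[of k] ij by (simp add: g_def)
        next
          case False
          show ?thesis
          proof (cases "k = i")
            case True then show ?thesis using st[of j] ij by (simp add: g_def)
          next
            case False
            then have "k > i" using \<open>\<not> k < i\<close> by simp
            then show ?thesis using st[of "k + (j - i)"] ij k by (simp add: g_def m_def)
          qed
        qed
      qed
    qed
    then have "n \<le> m" by (rule mn)
    then show False using ij by (simp add: m_def)
  qed
  have tin: "t \<in> set cs" using n0 f0 nth[of 0] len by (metis nth_mem)
  have steps: "\<forall>i<length cs. (cs!i, cs!((i+1) mod length cs)) \<in> R"
  proof (intro allI impI)
    fix i assume i: "i < length cs"
    show "(cs!i, cs!((i+1) mod length cs)) \<in> R"
    proof (cases "i + 1 < n")
      case True then show ?thesis using st[of i] i len nth by simp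
    next
      case False then have "i + 1 = n" using i len by simp
      then show ?thesis using st[of i] i len nth[of i] nth[of 0] n0 f0 fn by simp
    qed
  qed
  show ?thesis using n2 dist tin steps len by auto
qed


lemma cross_nat:
  fixes h :: "nat \<Rightarrow> nat"
  shows "0 < m \<Longrightarrow> h 0 \<ge> p \<Longrightarrow> h m \<le> p \<Longrightarrow> \<exists>i<m. h i \<ge> p \<and> h (Suc i) \<le> p"
proof (induction m)
  case 0 then show ?case by simp
next
  case (Suc m)
  show ?case
  proof (cases "m = 0")
    case True then show ?thesis using Suc.prems by auto
  next
    case False
    show ?thesis
    proof (cases "h m \<le> p")
      case True then obtain i where "i<m" "h i \<ge> p" "h (Suc i) \<le> p" using Suc.IH False Suc.prems by auto
      then show ?thesis by (intro exI[of _ i]) auto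
    next
      case False then show ?thesis using Suc.prems by (intro exI[of _ m]) auto
    qed
  qed
qed

lemma aff_intro: "l < r \<Longrightarrow> r < length \<sigma> \<Longrightarrow> (\<sigma>!r, \<sigma>!l) \<in> A \<Longrightarrow> l \<le> i \<Longrightarrow> i \<le> r \<Longrightarrow> \<sigma>!i \<in> T
  \<Longrightarrow> (\<sigma>!r, \<sigma>!l) \<in> affected_arcs A T \<sigma>"
  unfolding affected_arcs_def by blast

lemma order_to_fas:
  assumes tour: "tournament V A" and ord: "is_order V \<sigma>"
  shows "T_fas V A T (affected_arcs A T \<sigma>)"
proof -
  let ?S = "affected_arcs A T \<sigma>"
  have sub: "?S \<subseteq> A" unfolding affected_arcs_def by auto
  have irr: "\<And>v. (v,v) \<notin> A" using tour unfolding tournament_def by auto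
  have dist: "distinct \<sigma>" and setV: "set \<sigma> = V" using ord unfolding is_order_def by auto
  define pos where "pos v = (SOME i. i < length \<sigma> \<and> \<sigma>!i = v)" for v
  have pos: "\<And>v. v \<in> V \<Longrightarrow> pos v < length \<sigma> \<and> \<sigma>!(pos v) = v"
  proof -
    fix v assume "v \<in> V"
    then have "\<exists>i. i < length \<sigma> \<and> \<sigma>!i = v" using setV by (metis in_set_conv_nth)
    then show "pos v < length \<sigma> \<and> \<sigma>!(pos v) = v" unfolding pos_def by (rule someI_ex)
  qed
  have noc: "\<nexists>cs. T_cycle V (A - ?S) T cs"
  proof
    assume "\<exists>cs. T_cycle V (A - ?S) T cs"
    then obtain cs t where dc: "dicycle V (A - ?S) cs" and tc: "t \<in> set cs" and tT: "t \<in> T"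
      unfolding T_cycle_def by blast
    define n where "n = length cs"
    have n2: "n \<ge> 2" and csV: "set cs \<subseteq> V"
      and st: "\<And>i. i < n \<Longrightarrow> (cs!i, cs!((i+1) mod n)) \<in> A - ?S"
      using dc unfolding dicycle_def n_def by auto
    obtain j where j: "j < n" "cs!j = t" using tc unfolding n_def by (metis in_set_conv_nth)
    have tV: "t \<in> V" using tc csV by auto
    define h where "h i = pos (cs!((j+i) mod n))" for i
    have "h 0 = pos t" "h n = pos t" using j n2 by (simp_all add: h_def)
    then obtain i where i: "i < n" "h i \<ge> pos t" "h (Suc i) \<le> pos t"
      using cross_nat[where m=n and h=h and p="pos t"] n2 by auto
    define a where "a = cs!((j+i) mod n)"
    define b where "b = cs!((j+Suc i) mod n)"
    have "(j + Suc i) mod n = ((j+i) mod n + 1) mod n" by (simp add: mod_Suc_eq)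
    then have ab: "(a,b) \<in> A - ?S" using st[of "(j+i) mod n"] n2 unfolding a_def b_def by simp
    have aV: "a \<in> V" and bV: "b \<in> V" unfolding a_def b_def using csV n2
      by (metis n_def nth_mem subsetD mod_less_divisor not_numeral_le_zero neq0_conv)+
    have "a \<noteq> b" using ab irr by auto
    then have "pos a \<noteq> pos b" using pos aV bV by metis
    then have lt: "pos b < pos a" using i unfolding h_def a_def b_def by simp
    have pt: "pos b \<le> pos t" "pos t \<le> pos a" using i unfolding h_def a_def b_def by auto
    have "(\<sigma>!(pos a), \<sigma>!(pos b)) \<in> ?S"
      by (rule aff_intro[where i="pos t"]) (use lt pos[OF aV] pos[OF bV] pos[OF tV] ab tT pt in auto)
    then show False using ab pos[OF aV] pos[OF bV] by simp
  qed
  show ?thesis unfolding T_fas_def using sub noc by blast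
qed


lemma fas_to_order:
  assumes tour: "tournament V A" and fas: "T_fas V A T S"
  shows "W \<subseteq> V \<Longrightarrow> \<exists>\<sigma>. is_order W \<sigma> \<and> affected_arcs A T \<sigma> \<subseteq> S"
proof (induction "card W" arbitrary: W rule: less_induct)
  case less
  have finV: "finite V" using tour unfolding tournament_def by auto
  have finW: "finite W" using less.prems finV finite_subset by blast
  have irr: "\<And>v. (v,v) \<notin> A" using tour unfolding tournament_def by auto
  show ?case
  proof (cases "W = {}")
    case True
    then show ?thesis by (intro exI[of _ "[]"]) (simp add: is_order_def affected_arcs_def)
  next
    case Wne: False
    define cl where "cl C \<longleftrightarrow> C \<subseteq> W \<and> C \<noteq> {} \<and> (\<forall>x\<in>C. \<forall>y\<in>W. (x,y) \<in> A - S \<longrightarrow> y \<in> C)" for C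
    have "cl W" using Wne unfolding cl_def by auto
    then obtain C where clC: "cl C" and minC: "\<And>C'. cl C' \<Longrightarrow> card C \<le> card C'"
      using ex_has_least_nat[of cl W card] by blast
    have CW: "C \<subseteq> W" and Cne: "C \<noteq> {}"
      and Ccl: "\<And>x y. x \<in> C \<Longrightarrow> y \<in> W \<Longrightarrow> (x,y) \<in> A - S \<Longrightarrow> y \<in> C"
      using clC unfolding cl_def by auto
    have finC: "finite C" using CW finW finite_subset by blast
    define EW where "EW = (A - S) \<inter> (W \<times> W)"
    have reach: "\<And>u. u \<in> C \<Longrightarrow> {w. (u,w) \<in> EW\<^sup>*} = C"
    proof -
      fix u assume uC: "u \<in> C"
      let ?R = "{w. (u,w) \<in> EW\<^sup>*}"
      have RC: "?R \<subseteq> C"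
      proof
        fix w assume "w \<in> ?R"
        then have "(u,w) \<in> EW\<^sup>*" by simp
        then show "w \<in> C"
          by (induction rule: rtrancl_induct) (use uC Ccl in \<open>auto simp: EW_def\<close>)
      qed
      have "cl ?R" unfolding cl_def
      proof (intro conjI ballI impI)
        show "?R \<subseteq> W" using RC CW by auto
        show "?R \<noteq> {}" by auto
        fix x y assume "x \<in> ?R" "y \<in> W" "(x,y) \<in> A - S"
        moreover have "x \<in> W" using \<open>x \<in> ?R\<close> RC CW by auto
        ultimately show "y \<in> ?R" by (auto simp: EW_def intro: rtrancl_into_rtrancl)
      qed
      then have "card C \<le> card ?R" by (rule minC)
      then show "?R = C" using RC finC by (simp add: card_seteq)
    qed
    have single: "\<And>t. t \<in> C \<Longrightarrow> t \<in> T \<Longrightarrow> C = {t}"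
    proof (rule ccontr)
      fix t assume tC: "t \<in> C" and tT: "t \<in> T" and ne: "C \<noteq> {t}"
      then obtain v where vC: "v \<in> C" and vt: "v \<noteq> t" by auto
      have "v \<in> {w. (t,w) \<in> EW\<^sup>*}" using reach[OF tC] vC by (rule ssubst)
      then have "(t,v) \<in> EW\<^sup>*" by (rule CollectD)
      then have tv: "(t,v) \<in> EW\<^sup>+" using vt by (simp add: rtrancl_eq_or_trancl)
      have "t \<in> {w. (v,w) \<in> EW\<^sup>*}" using reach[OF vC] tC by (rule ssubst)
      then have "(v,t) \<in> EW\<^sup>*" by (rule CollectD)
      with tv have tt: "(t,t) \<in> EW\<^sup>+" by (rule trancl_rtrancl_trancl)
      have irrE: "\<forall>v. (v,v) \<notin> EW" using irr unfolding EW_def by blast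
      from cycle_from_trancl[OF tt irrE] obtain cs where cs: "2 \<le> length cs" "distinct cs" "t \<in> set cs"
        "\<forall>i<length cs. (cs!i, cs!((i+1) mod length cs)) \<in> EW"
        by blast
      have "set cs \<subseteq> V"
      proof
        fix x assume "x \<in> set cs"
        then obtain i where "i < length cs" "cs!i = x" by (metis in_set_conv_nth)
        then have "x \<in> W" using cs(4) by (auto simp: EW_def)
        then show "x \<in> V" using less.prems by auto
      qed
      moreover have "\<forall>i<length cs. (cs!i, cs!((i+1) mod length cs)) \<in> A - S"
        using cs(4) by (simp add: EW_def)
      ultimately have "dicycle V (A - S) cs" using cs(1,2) unfolding dicycle_def by blast
      then have "T_cycle V (A - S) T cs"
        using cs(3) tT unfolding T_cycle_def by blast
      then show False using fas unfolding T_fas_def by blast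
    qed
    define W' where "W' = W - C"
    have "W' \<subset> W" unfolding W'_def using CW Cne by blast
    then have "card W' < card W" using finW by (rule psubset_card_mono[rotated])
    then obtain \<sigma>' where o': "is_order W' \<sigma>'" and a': "affected_arcs A T \<sigma>' \<subseteq> S"
      using less.hyps[of W'] less.prems unfolding W'_def by blast
    obtain \<tau> where tau: "set \<tau> = C" "distinct \<tau>" using finite_distinct_list[OF finC] by blast
    define \<sigma> where "\<sigma> = \<sigma>' @ \<tau>"
    have s': "set \<sigma>' = W - C" "distinct \<sigma>'" using o' unfolding is_order_def W'_def by auto
    have "set \<sigma> = W" unfolding \<sigma>_def using s'(1) tau(1) CW by auto
    moreover have "distinct \<sigma>" unfolding \<sigma>_def using s' tau by auto
    ultimately have o: "is_order W \<sigma>" unfolding is_order_def by simp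
    have dist: "distinct \<sigma>" using o unfolding is_order_def by simp
    define L where "L = length \<sigma>'"
    have lenS: "length \<sigma> = L + length \<tau>" by (simp add: \<sigma>_def L_def)
    have nthL: "\<And>j. j < L \<Longrightarrow> \<sigma>!j = \<sigma>'!j" by (simp add: \<sigma>_def L_def nth_append)
    have nthR: "\<And>j. L \<le> j \<Longrightarrow> \<sigma>!j = \<tau>!(j - L)" by (simp add: \<sigma>_def L_def nth_append)
    have inC: "\<And>j. L \<le> j \<Longrightarrow> j < length \<sigma> \<Longrightarrow> \<sigma>!j \<in> C"
    proof -
      fix j assume "L \<le> j" "j < length \<sigma>"
      then have "j - L < length \<tau>" using lenS by simp
      then show "\<sigma>!j \<in> C" using nthR[OF \<open>L \<le> j\<close>] tau(1) nth_mem by metis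
    qed
    have inW': "\<And>j. j < L \<Longrightarrow> \<sigma>!j \<in> W'"
      using nthL o' unfolding is_order_def L_def by (metis nth_mem)
    have "affected_arcs A T \<sigma> \<subseteq> S"
    proof
      fix z assume "z \<in> affected_arcs A T \<sigma>"
      then obtain r l i where z: "z = (\<sigma>!r, \<sigma>!l)" and lr: "l < r" "r < length \<sigma>"
        and zA: "(\<sigma>!r, \<sigma>!l) \<in> A" and i: "l \<le> i" "i \<le> r" "\<sigma>!i \<in> T"
        unfolding affected_arcs_def by blast
      show "z \<in> S"
      proof (rule ccontr)
        assume zS: "z \<notin> S"
        show False
        proof (cases "r < L")
          case True
          have e: "\<sigma>!r = \<sigma>'!r" "\<sigma>!l = \<sigma>'!l" "\<sigma>!i = \<sigma>'!i"
            using True lr i nthL by auto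
          have "(\<sigma>'!r, \<sigma>'!l) \<in> affected_arcs A T \<sigma>'"
            by (rule aff_intro[where l=l and r=r and i=i]) (use lr zA i True e L_def in auto)
          then show False using a' zS z e by auto
        next
          case rL: False
          have rC: "\<sigma>!r \<in> C" using rL lr inC by simp
          show False
          proof (cases "l < L")
            case True
            then have "\<sigma>!l \<in> W'" by (rule inW')
            then show False using Ccl[OF rC, of "\<sigma>!l"] zA zS z unfolding W'_def by auto
          next
            case False
            have "\<sigma>!i \<in> C" using False i lr inC by simp
            then have "C = {\<sigma>!i}" using single i by blast
            moreover have "\<sigma>!l \<in> C" using False lr inC by simp
            ultimately have "\<sigma>!l = \<sigma>!r" using rC by auto
            moreover have "l < length \<sigma>" using lr by simp
            ultimately show False using nth_eq_iff_index_eq[OF dist, of l r] lr by simp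
          qed
        qed
      qed
    qed
    then show ?thesis using o by blast
  qed
qed

theorem proposition1:
  fixes V :: "'a set" and A :: "('a \<times> 'a) set" and T :: "'a set" and k :: nat
  assumes "tournament V A" and "T \<subseteq> V"
  shows "(\<exists>S. T_fas V A T S \<and> card S \<le> k) \<longleftrightarrow> (\<exists>\<sigma>. is_order V \<sigma> \<and> cost A T \<sigma> \<le> k)"
proof
  assume "\<exists>S. T_fas V A T S \<and> card S \<le> k"
  then obtain S where S: "T_fas V A T S" "card S \<le> k" by blast
  obtain \<sigma> where o: "is_order V \<sigma>" and a: "affected_arcs A T \<sigma> \<subseteq> S"
    using fas_to_order[OF assms(1) S(1), of V] by blast
  have "finite A" using assms(1) unfolding tournament_def by (metis finite_SigmaI finite_subset)
  then have "finite S" using S(1) unfolding T_fas_def by (metis finite_subset)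
  then have "cost A T \<sigma> \<le> card S" unfolding cost_def using a card_mono by blast
  then show "\<exists>\<sigma>. is_order V \<sigma> \<and> cost A T \<sigma> \<le> k" using o S(2) by auto
next
  assume "\<exists>\<sigma>. is_order V \<sigma> \<and> cost A T \<sigma> \<le> k"
  then obtain \<sigma> where "is_order V \<sigma>" "cost A T \<sigma> \<le> k" by blast
  then show "\<exists>S. T_fas V A T S \<and> card S \<le> k"
    using order_to_fas[OF assms(1)] unfolding cost_def by blast
qed

end
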